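(* Let $\alpha,g_0,\kappa_0,b_0,\lambda,\omega>0$, let $k>l\ge0$ be integers with $n=k-l$, and set $\mu=\lambda\omega n$, assuming $\mu>2b_0$. For $\Delta\tau>0$ put $K=\frac{2\lambda\kappa_0}{\alpha g_0\Delta\tau}$, $C=\frac{\alpha g_0\Delta\tau}{2\lambda\kappa_0}$, and for real nonzero $b\neq b'$ define $$S_{kl}(b,b')=\frac{C^2}{b_0\pi}\int_{-\infty}^{\infty}e^{-i\mu b''}\,\frac{\sin^2(b_0b'')}{b''^2}\,\frac{\sin[K(b-b'')]}{b-b''}\,\frac{\sin[K(b''-b')]}{b''-b'}\,db''.$$ Then $S_{kl}=K_1$ for $0<\Delta\tau\le\frac{4\lambda\kappa_0}{\alpha g_0(\mu+2b_0)}$, $S_{kl}=K_2$ for $\frac{4\lambda\kappa_0}{\alpha g_0(\mu+2b_0)}\le\Delta\tau\le\frac{4\kappa_0}{\alpha g_0\omega n}$, $S_{kl}=K_3$ for $\frac{4\kappa_0}{\alpha g_0\omega n}\le\Delta\tau\le\frac{4\lambda\kappa_0}{\alpha g_0(\mu-2b_0)}$, and $S_{kl}=0$ for $\Delta\tau\ge\frac{4\lambda\kappa_0}{\alpha g_0(\mu-2b_0)}$, where $K_1=\frac{iC^2}{2b_0}\Big[\frac{e^{-i\mu b'-iK(b-b')}}{b-b'}\frac{\sin^2(b_0b')}{b'^2}-\frac{e^{-i\mu b+iK(b-b')}}{b-b'}\frac{\sin^2(b_0b)}{b^2}\Big]$, $K_2=\frac{C^2}{8b_0}\Big[\frac{\tilde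 f(b')e^{-iK(b-b')}}{b-b'}-\frac{\tilde f(b)e^{iK(b-b')}}{b-b'}-\frac{\tilde\phi_+(b,b')e^{-iK(b+b')}}{bb'}\Big]$, $K_3=\frac{C^2}{8b_0}\Big[\frac{\tilde h(b)e^{iK(b-b')}}{b-b'}-\frac{\tilde h(b')e^{-iK(b-b')}}{b-b'}+\frac{\tilde\phi_-(b,b')e^{-iK(b+b')}}{bb'}\Big]$, with $\tilde f(x)=i\,e^{-i\mu x}[4\sin^2(b_0x)+e^{-2ib_0x}]/x^2$, $\tilde h(x)=i\,e^{-i(\mu-2b_0)x}/x^2$, $\tilde\phi_\pm(b,b')=\pm2b_0+\mu+i\frac{b+b'}{bb'}-2K$. In particular, if $\lambda\omega>2b_0$, all pointer states are mutually exactly orthogonal for $\Delta\tau\ge\frac{4\lambda\kappa_0}{\alpha g_0(\lambda\omega-2b_0)}$.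
   Context: This is the orthogonality function for the pointer states $\rho_k,\rho_l$ in the energy measurement of a quantum harmonic oscillator of angular frequency $\omega$ (eigenvalues $(k+\tfrac12)\hbar\omega$), with probe initial state $\frac{1}{\sqrt{\kappa_0\pi}}\frac{\sin(\kappa_0 q)}{q}$ and pointer initial state $\frac{1}{\sqrt{b_0\pi}}\frac{\sin(b_0 b)}{b}$. *)

theory Defs
  imports "HOL-Analysis.Analysis"
begin

text \<open>Parameters: mu = lam*omega*n, K = 2 lam kappa0/(alpha g0 dtau), C = 1/K.
  All functions below are stated in terms of b0, mu, K, C.\<close>

definition orth_integrand :: "real \<Rightarrow> real \<Rightarrow> real \<Rightarrow> real \<Rightarrow> real \<Rightarrow> real \<Rightarrow> complex" where
  "orth_integrand b0 mu K b b' x =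
     exp (- \<i> * complex_of_real (mu * x)) *
     complex_of_real ((sin (b0 * x))\<^sup>2 / x\<^sup>2 * (sin (K * (b - x)) / (b - x))
                      * (sin (K * (x - b')) / (x - b')))"

definition S_orth :: "real \<Rightarrow> real \<Rightarrow> real \<Rightarrow> real \<Rightarrow> real \<Rightarrow> real \<Rightarrow> complex" where
  "S_orth b0 mu K C b b' =
     complex_of_real (C\<^sup>2 / (b0 * pi)) * integral UNIV (orth_integrand b0 mu K b b')"

definition K1_orth :: "real \<Rightarrow> real \<Rightarrow> real \<Rightarrow> real \<Rightarrow> real \<Rightarrow> real \<Rightarrow> complex" where
  "K1_orth b0 mu K C b b' =
     \<i> * complex_of_real (C\<^sup>2 / (2 * b0)) *
     (exp (- \<i> * complex_of_real (mu * b') - \<i> * complex_of_real (K * (b - b'))) / complex_of_real (b - b')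
        * complex_of_real ((sin (b0 * b'))\<^sup>2 / b'\<^sup>2)
      - exp (- \<i> * complex_of_real (mu * b) + \<i> * complex_of_real (K * (b - b'))) / complex_of_real (b - b')
        * complex_of_real ((sin (b0 * b))\<^sup>2 / b\<^sup>2))"

definition f_tilde :: "real \<Rightarrow> real \<Rightarrow> real \<Rightarrow> complex" where
  "f_tilde b0 mu x = \<i> * exp (- \<i> * complex_of_real (mu * x)) *
     (complex_of_real (4 * (sin (b0 * x))\<^sup>2) + exp (- 2 * \<i> * complex_of_real (b0 * x)))
     / complex_of_real (x\<^sup>2)"

definition h_tilde :: "real \<Rightarrow> real \<Rightarrow> real \<Rightarrow> complex" where
  "h_tilde b0 mu x = \<i> * exp (- \<i> * complex_of_real ((mu - 2 * b0) * x)) / complex_of_real (x\<^sup>2)"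

definition phi_tilde :: "real \<Rightarrow> real \<Rightarrow> real \<Rightarrow> real \<Rightarrow> real \<Rightarrow> real \<Rightarrow> complex" where
  "phi_tilde s b0 mu K b b' =
     complex_of_real (s * 2 * b0 + mu) + \<i> * complex_of_real ((b + b') / (b * b'))
     - complex_of_real (2 * K)"

definition K2_orth :: "real \<Rightarrow> real \<Rightarrow> real \<Rightarrow> real \<Rightarrow> real \<Rightarrow> real \<Rightarrow> complex" where
  "K2_orth b0 mu K C b b' =
     complex_of_real (C\<^sup>2 / (8 * b0)) *
     (f_tilde b0 mu b' * exp (- \<i> * complex_of_real (K * (b - b'))) / complex_of_real (b - b')
      - f_tilde b0 mu b * exp (\<i> * complex_of_real (K * (b - b'))) / complex_of_real (b - b')
      - phi_tilde 1 b0 mu K b b' * exp (- \<i> * complex_of_real (K * (b + b'))) / complex_of_real (b * b'))"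

definition K3_orth :: "real \<Rightarrow> real \<Rightarrow> real \<Rightarrow> real \<Rightarrow> real \<Rightarrow> real \<Rightarrow> complex" where
  "K3_orth b0 mu K C b b' =
     complex_of_real (C\<^sup>2 / (8 * b0)) *
     (h_tilde b0 mu b * exp (\<i> * complex_of_real (K * (b - b'))) / complex_of_real (b - b')
      - h_tilde b0 mu b' * exp (- \<i> * complex_of_real (K * (b - b'))) / complex_of_real (b - b')
      + phi_tilde (-1) b0 mu K b b' * exp (- \<i> * complex_of_real (K * (b + b'))) / complex_of_real (b * b'))"

end

theory Submission
  imports Defs "HOL-Complex_Analysis.Complex_Analysis" "HOL-Probability.Sinc_Integral"
begin

definition sc :: "real \<Rightarrow> complex \<Rightarrow> complex" where
  "sc a w = (if w = 0 then complex_of_real a else sin (complex_of_real a * w) / w)"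

lemma sc_tendsto0: "((\<lambda>w. sin (complex_of_real a * w) / w) \<longlongrightarrow> complex_of_real a) (at 0)"
proof -
  have "((\<lambda>w. sin (complex_of_real a * w)) has_field_derivative (complex_of_real a * cos (complex_of_real a * 0))) (at 0)"
    by (auto intro!: derivative_eq_intros)
  hence "((\<lambda>w. (sin (complex_of_real a * w) - sin (complex_of_real a * 0)) / (w - 0)) \<longlongrightarrow> complex_of_real a) (at 0)"
    unfolding has_field_derivative_iff by simp
  thus ?thesis by simp
qed

lemma sc_holo: "sc a holomorphic_on UNIV"
proof (rule no_isolated_singularity'[where K="{0}"])
  show "(sc a \<longlongrightarrow> sc a z) (at z within UNIV)" if "z \<in> {0}" for z
  proof -
    have "(sc a \<longlongrightarrow> complex_of_real a) (at 0)"
      using sc_tendsto0[of a] by (rule Lim_transform_eventually) (auto simp: sc_def eventually_at_filter)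
    thus ?thesis using that by (simp add: sc_def)
  qed
  have "(\<lambda>w. sin (complex_of_real a * w) / w) holomorphic_on (UNIV - {0})"
    by (auto intro!: holomorphic_intros)
  thus "sc a holomorphic_on (UNIV - {0})"
    by (rule holomorphic_transform) (auto simp: sc_def)
qed auto


definition Rf :: "real \<Rightarrow> real \<Rightarrow> complex \<Rightarrow> complex" where
  "Rf b b' z = 1 / (z^2 * (complex_of_real b - z) * (z - complex_of_real b'))"

definition Resf :: "real \<Rightarrow> real \<Rightarrow> (complex \<Rightarrow> complex) \<Rightarrow> complex" where
  "Resf b b' N = - N (complex_of_real b) / (complex_of_real (b^2 * (b - b')))
     + N (complex_of_real b') / complex_of_real (b'^2 * (b - b'))
     - deriv N 0 / complex_of_real (b * b') - N 0 * complex_of_real ((b + b') / (b * b')^2)"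

lemma open_compl_finite: "finite P \<Longrightarrow> open (- (P::complex set))"
  by (simp add: open_Compl finite_imp_closed)

lemma Rf_alt:
  shows "N * Rf b b' w = (- N / (w^2 * (w - complex_of_real b'))) / (w - complex_of_real b)"
        "N * Rf b b' w = (N / (w^2 * (complex_of_real b - w))) / (w - complex_of_real b')"
proof -
  have e: "w^2 * (complex_of_real b - w) * (w - complex_of_real b') = - (w^2 * (w - complex_of_real b') * (w - complex_of_real b))"
    by (simp add: algebra_simps)
  have "N * Rf b b' w = N / (w^2 * (complex_of_real b - w) * (w - complex_of_real b'))"
    by (simp add: Rf_def)
  also have "\<dots> = - (N / (w^2 * (w - complex_of_real b') * (w - complex_of_real b)))"
    unfolding e by simp
  finally show "N * Rf b b' w = (- N / (w^2 * (w - complex_of_real b'))) / (w - complex_of_real b)"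
    by simp
  show "N * Rf b b' w = (N / (w^2 * (complex_of_real b - w))) / (w - complex_of_real b')"
    by (simp add: Rf_def)
qed

lemma res_b:
  assumes "N holomorphic_on UNIV" "b \<noteq> 0" "b' \<noteq> 0" "b \<noteq> b'"
  shows "residue (\<lambda>z. N z * Rf b b' z) (complex_of_real b)
         = - N (complex_of_real b) / (complex_of_real (b^2 * (b - b')))"
proof -
  define g where "g w = - N w / (w^2 * (w - complex_of_real b'))" for w
  have "residue (\<lambda>z. N z * Rf b b' z) (complex_of_real b) = residue (\<lambda>w. g w / (w - complex_of_real b)) (complex_of_real b)"
  proof (rule residue_cong)
    show "\<forall>\<^sub>F z in at (complex_of_real b). N z * Rf b b' z = g z / (z - complex_of_real b)"
    proof -
      have "\<forall>\<^sub>F w in at (complex_of_real b). w \<in> - {0, complex_of_real b'} - {complex_of_real b}"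
        using assms by (intro eventually_at_in_open open_compl_finite) auto
      thus ?thesis using assms by (elim eventually_mono) (simp only: g_def Rf_alt(1))
    qed
  qed simp
  also have "\<dots> = g (complex_of_real b)"
    using assms
    by (intro residue_simple[of "- {0, complex_of_real b'}"])
       (auto simp: g_def intro!: holomorphic_intros holomorphic_on_subset[OF assms(1)] open_compl_finite)
  also have "\<dots> = - N (complex_of_real b) / (complex_of_real (b^2 * (b - b')))"
    using assms by (simp add: g_def)
  finally show ?thesis .
qed

lemma res_b':
  assumes "N holomorphic_on UNIV" "b \<noteq> 0" "b' \<noteq> 0" "b \<noteq> b'"
  shows "residue (\<lambda>z. N z * Rf b b' z) (complex_of_real b')
         = N (complex_of_real b') / (complex_of_real (b'^2 * (b - b')))"
proof -
  define g where "g w = N w / (w^2 * (complex_of_real b - w))" for w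
  have "residue (\<lambda>z. N z * Rf b b' z) (complex_of_real b') = residue (\<lambda>w. g w / (w - complex_of_real b')) (complex_of_real b')"
  proof (rule residue_cong)
    show "\<forall>\<^sub>F z in at (complex_of_real b'). N z * Rf b b' z = g z / (z - complex_of_real b')"
    proof -
      have "\<forall>\<^sub>F w in at (complex_of_real b'). w \<in> - {0, complex_of_real b} - {complex_of_real b'}"
        using assms by (intro eventually_at_in_open open_compl_finite) auto
      thus ?thesis using assms by (elim eventually_mono) (simp only: g_def Rf_alt(2))
    qed
  qed simp
  also have "\<dots> = g (complex_of_real b')"
    using assms
    by (intro residue_simple[of "- {0, complex_of_real b}"])
       (auto simp: g_def intro!: holomorphic_intros holomorphic_on_subset[OF assms(1)] open_compl_finite)
  also have "\<dots> = N (complex_of_real b') / (complex_of_real (b'^2 * (b - b')))"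
    using assms by (simp add: g_def)
  finally show ?thesis .
qed

lemma res_0:
  assumes "N holomorphic_on UNIV" "b \<noteq> 0" "b' \<noteq> 0" "b \<noteq> b'"
  shows "residue (\<lambda>z. N z * Rf b b' z) 0
         = - deriv N 0 / complex_of_real (b * b') - N 0 * complex_of_real ((b + b') / (b * b')^2)"
proof -
  define g where "g w = N w / ((complex_of_real b - w) * (w - complex_of_real b'))" for w
  define S where "S = - {complex_of_real b, complex_of_real b'}"
  have S: "open S" "0 \<in> S" using assms by (auto simp: S_def intro!: open_compl_finite)
  have gh: "g holomorphic_on S" unfolding g_def S_def
    by (auto intro!: holomorphic_intros holomorphic_on_subset[OF assms(1)])
  have "residue (\<lambda>z. N z * Rf b b' z) 0 = residue (\<lambda>w. g w / (w - 0) ^ Suc 1) 0"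
  proof (rule residue_cong)
    show "\<forall>\<^sub>F z in at 0. N z * Rf b b' z = g z / (z - 0) ^ Suc 1"
      using eventually_at_in_open[OF S] assms
      by (elim eventually_mono) (auto simp: S_def g_def Rf_def field_simps power2_eq_square)
  qed simp
  also have "\<dots> = deriv g 0"
    using residue_holomorphic_over_power[OF S gh, of 1] by simp
  also have "deriv g 0 = - deriv N 0 / complex_of_real (b * b') - N 0 * complex_of_real ((b + b') / (b * b')^2)"
  proof -
    have dN: "(N has_field_derivative deriv N 0) (at 0)"
      using assms(1) by (meson UNIV_I holomorphic_derivI open_UNIV)
    have "(g has_field_derivative
       (deriv N 0 * ((complex_of_real b - 0) * (0 - complex_of_real b')) - N 0 * ((-1) * (0 - complex_of_real b') + (complex_of_real b - 0) * 1))
        / ((complex_of_real b - 0) * (0 - complex_of_real b'))^2) (at 0)"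
      unfolding g_def using assms
      by (auto intro!: derivative_eq_intros dN simp: power2_eq_square)
    from DERIV_imp_deriv[OF this] show ?thesis using assms
      by (simp add: field_simps power2_eq_square)
  qed
  finally show ?thesis .
qed

lemma rect_split:
  assumes "continuous_on (path_image (rectpath a1 a3)) f"
  defines "a2 \<equiv> Complex (Re a3) (Im a1)" and "a4 \<equiv> Complex (Re a1) (Im a3)"
  shows "contour_integral (rectpath a1 a3) f = contour_integral (linepath a1 a2) f
     + contour_integral (linepath a2 a3) f + contour_integral (linepath a3 a4) f
     + contour_integral (linepath a4 a1) f"
proof -
  have pi: "path_image (rectpath a1 a3) = closed_segment a1 a2 \<union> closed_segment a2 a3 \<union> closed_segment a3 a4 \<union> closed_segment a4 a1"
    by (simp add: rectpath_def Let_def path_image_join a2_def a4_def Un_assoc)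
  have i1: "f contour_integrable_on linepath a1 a2" and i2: "f contour_integrable_on linepath a2 a3"
   and i3: "f contour_integrable_on linepath a3 a4" and i4: "f contour_integrable_on linepath a4 a1"
    by (auto intro!: contour_integrable_continuous_linepath continuous_on_subset[OF assms(1)] simp: pi)
  have r: "rectpath a1 a3 = linepath a1 a2 +++ linepath a2 a3 +++ linepath a3 a4 +++ linepath a4 a1"
    by (simp add: rectpath_def Let_def a2_def a4_def)
  show ?thesis unfolding r using i1 i2 i3 i4
    by (simp add: contour_integrable_joinI)
qed

lemma seg_bound:
  assumes "continuous_on (closed_segment a b) f" "\<And>z. z \<in> closed_segment a b \<Longrightarrow> norm (f z) \<le> B"
  shows "norm (contour_integral (linepath a b) f) \<le> B * norm (b - a)"
proof -
  have "0 \<le> B" using assms(2)[of a] by (meson norm_ge_zero order_trans ends_in_segment(1))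
  thus ?thesis
    by (intro contour_integral_bound_linepath contour_integrable_continuous_linepath assms)
qed

lemma Rf_bound:
  assumes "norm z \<ge> 2 * (\<bar>b\<bar> + \<bar>b'\<bar> + 1)"
  shows "norm (Rf b b' z) \<le> 4 / norm z ^ 4"
proof -
  have z: "norm z > 0" using assms by (smt (verit) abs_ge_zero)
  have "norm (complex_of_real b - z) \<ge> norm z - \<bar>b\<bar>"
    by (metis norm_minus_commute norm_of_real norm_triangle_ineq2)
  hence 1: "norm (complex_of_real b - z) \<ge> norm z / 2" using assms abs_ge_zero[of b'] abs_ge_zero[of b] by (smt (verit) field_sum_of_halves)
  have "norm (z - complex_of_real b') \<ge> norm z - \<bar>b'\<bar>"
    by (metis norm_of_real norm_triangle_ineq2)
  hence 2: "norm (z - complex_of_real b') \<ge> norm z / 2" using assms abs_ge_zero[of b'] abs_ge_zero[of b] by (smt (verit) field_sum_of_halves)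
  have "norm z ^ 2 * (norm z / 2) * (norm z / 2) \<le> norm z ^ 2 * norm (complex_of_real b - z) * norm (z - complex_of_real b')"
    using 1 2 z by (intro mult_mono) auto
  hence "norm z ^ 4 / 4 \<le> norm (z^2 * (complex_of_real b - z) * (z - complex_of_real b'))"
    by (simp only: norm_mult norm_power) (simp add: power2_eq_square power4_eq_xxxx mult_ac)
  moreover have "norm z ^ 4 / 4 > 0" using z by simp
  ultimately show ?thesis
    unfolding Rf_def norm_divide norm_one
    by (simp add: divide_simps)
qed

lemma side_bound:
  assumes "continuous_on (closed_segment a c) f" "\<And>z. z \<in> closed_segment a c \<Longrightarrow> norm (f z) \<le> B"
    and "norm (c - a) \<le> L" "B \<ge> 0"
  shows "norm (contour_integral (linepath a c) f) \<le> B * L"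
  using seg_bound[OF assms(1,2)] mult_left_mono[OF assms(3,4)] by linarith

lemma vert_seg: "z \<in> closed_segment (Complex x y1) (Complex x y2) \<Longrightarrow> Re z = x \<and> min y1 y2 \<le> Im z \<and> Im z \<le> max y1 y2"
  by (auto simp: closed_segment_same_Re closed_segment_eq_real_ivl split: if_splits)

lemma horiz_seg: "z \<in> closed_segment (Complex x1 y) (Complex x2 y) \<Longrightarrow> Im z = y \<and> min x1 x2 \<le> Re z \<and> Re z \<le> max x1 x2"
  by (auto simp: closed_segment_same_Im closed_segment_eq_real_ivl split: if_splits)

lemma norm_vert: "norm (Complex x y1 - Complex x y2) = \<bar>y1 - y2\<bar>"
  by (simp add: cmod_def)

lemma norm_horiz: "norm (Complex x1 y - Complex x2 y) = \<bar>x1 - x2\<bar>"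
  by (simp add: cmod_def)

lemma main_R:
  fixes b b' A R :: real and Nu Nd \<Phi> :: "complex \<Rightarrow> complex"
  assumes b: "b \<noteq> 0" "b' \<noteq> 0" "b \<noteq> b'"
  and Nu: "Nu holomorphic_on UNIV" and Nd: "Nd holomorphic_on UNIV"
  and Bu: "\<And>z. Im z \<ge> 0 \<Longrightarrow> norm (Nu z) \<le> A"
  and Bd: "\<And>z. Im z \<le> 1 \<Longrightarrow> norm (Nd z) \<le> A"
  and Phi: "\<Phi> holomorphic_on UNIV"
  and eq: "\<And>z. z \<notin> {0, complex_of_real b, complex_of_real b'} \<Longrightarrow> \<Phi> z = (Nu z + Nd z) * Rf b b' z"
  and R: "R \<ge> 2 * (\<bar>b\<bar> + \<bar>b'\<bar> + 1)"
  shows "norm (integral {-R..R} (\<lambda>x. \<Phi> (of_real x)) - 2 * pi * \<i> * Resf b b' Nu) \<le> 256 * A / R^3"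
proof -
  define P where "P = {0, complex_of_real b, complex_of_real b'}"
  define Hu where "Hu z = Nu z * Rf b b' z" for z
  define Hd where "Hd z = Nd z * Rf b b' z" for z
  define B where "B = 8 * A / R^4"
  have A0: "A \<ge> 0" using Bu[of 0] norm_ge_zero[of "Nu 0"] by (simp del: norm_ge_zero)
  have R2: "R \<ge> 2" and Rb: "\<bar>b\<bar> < R" "\<bar>b'\<bar> < R" using R by auto
  have R0: "R > 0" using R2 by simp
  have finP: "finite P" by (simp add: P_def)
  have Rf_holo: "Rf b b' holomorphic_on - P"
    unfolding Rf_def P_def by (auto intro!: holomorphic_intros)
  have Hu_holo: "Hu holomorphic_on - P" and Hd_holo: "Hd holomorphic_on - P"
    unfolding Hu_def Hd_def using Rf_holo Nu Nd
    by (auto intro!: holomorphic_intros holomorphic_on_subset[OF Nu] holomorphic_on_subset[OF Nd])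
  have Hu_cont: "continuous_on (-P) Hu" and Hd_cont: "continuous_on (-P) Hd"
    using Hu_holo Hd_holo by (auto intro: holomorphic_on_imp_continuous_on)
  have Phi_cont: "continuous_on S \<Phi>" for S
    using Phi holomorphic_on_imp_continuous_on continuous_on_subset by blast
  have nP: "z \<notin> P" if "norm z \<ge> R" for z
  proof -
    have "norm (complex_of_real b) < R" "norm (complex_of_real b') < R" using Rb by auto
    thus ?thesis using that R0 by (auto simp: P_def)
  qed
  have PHuHd: "\<Phi> z = Hu z + Hd z" if "z \<notin> P" for z
    using eq[of z] that by (simp add: P_def Hu_def Hd_def algebra_simps)
  have Rfb: "norm (Rf b b' z) \<le> 4 / R^4" if "norm z \<ge> R" for z
  proof -
    have "norm (Rf b b' z) \<le> 4 / norm z ^ 4" using Rf_bound[of b b' z] that R by linarith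
    also have "\<dots> \<le> 4 / R^4" using that R0 by (intro divide_left_mono power_mono) (auto intro!: mult_pos_pos)
    finally show ?thesis .
  qed
  have bHu: "norm (Hu z) \<le> B" if "Im z \<ge> 0" "norm z \<ge> R" for z
  proof -
    have "norm (Hu z) \<le> A * (4 / R^4)" unfolding Hu_def norm_mult
      using Bu[OF that(1)] Rfb[OF that(2)] A0 by (intro mult_mono) auto
    thus ?thesis unfolding B_def using A0 R0 by (simp add: field_simps)
  qed
  have bHd: "norm (Hd z) \<le> B" if "Im z \<le> 1" "norm z \<ge> R" for z
  proof -
    have "norm (Hd z) \<le> A * (4 / R^4)" unfolding Hd_def norm_mult
      using Bd[OF that(1)] Rfb[OF that(2)] A0 by (intro mult_mono) auto
    thus ?thesis unfolding B_def using A0 R0 by (simp add: field_simps)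
  qed
  have bPhi: "norm (\<Phi> z) \<le> 2 * B" if "Im z \<ge> 0" "Im z \<le> 1" "norm z \<ge> R" for z
  proof -
    have "norm (\<Phi> z) \<le> norm (Hu z) + norm (Hd z)"
      using PHuHd[OF nP[OF that(3)]] norm_triangle_ineq by simp
    thus ?thesis using bHu[OF that(1,3)] bHd[OF that(2,3)] by simp
  qed
  have B0: "B \<ge> 0" unfolding B_def using A0 R0 by simp
  have reR: "norm z \<ge> R" if "\<bar>Re z\<bar> = R" for z using abs_Re_le_cmod[of z] that by simp
  have imR: "norm z \<ge> R" if "\<bar>Im z\<bar> = R" for z using abs_Im_le_cmod[of z] that by simp
  note seg = closed_segment_same_Re closed_segment_same_Im closed_segment_eq_real_ivl
  have cont_P: "continuous_on S Hu" "continuous_on S Hd" if "S \<subseteq> -P" for S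
    using continuous_on_subset[OF Hu_cont that] continuous_on_subset[OF Hd_cont that] by auto
  have farP: "{z. norm z \<ge> R} \<subseteq> -P" using nP by auto
  define S1 where "S1 = contour_integral (linepath (Complex (-R) 0) (Complex R 0)) \<Phi>"
  define S2 where "S2 = contour_integral (linepath (Complex R 0) (Complex R 1)) \<Phi>"
  define S3 where "S3 = contour_integral (linepath (Complex R 1) (Complex (-R) 1)) \<Phi>"
  define S4 where "S4 = contour_integral (linepath (Complex (-R) 1) (Complex (-R) 0)) \<Phi>"
  have r1: "contour_integral (rectpath (Complex (-R) 0) (Complex R 1)) \<Phi> = 0"
    by (intro contour_integral_unique Cauchy_theorem_convex_simple[OF Phi]) auto
  have e1: "S1 + S2 + S3 + S4 = 0"
    using rect_split[OF Phi_cont, of "Complex (-R) 0" "Complex R 1"] r1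
    by (simp add: S1_def S2_def S3_def S4_def)
  define U1 where "U1 = contour_integral (linepath (Complex (-R) 1) (Complex R 1)) Hu"
  define U2 where "U2 = contour_integral (linepath (Complex R 1) (Complex R R)) Hu"
  define U3 where "U3 = contour_integral (linepath (Complex R R) (Complex (-R) R)) Hu"
  define U4 where "U4 = contour_integral (linepath (Complex (-R) R) (Complex (-R) 1)) Hu"
  have up_sub: "{z. Im z > 1/2} \<subseteq> -P" by (auto simp: P_def)
  have pi2: "path_image (rectpath (Complex (-R) 1) (Complex R R)) \<subseteq> {z. Im z > 1/2}"
  proof -
    have "path_image (rectpath (Complex (-R) 1) (Complex R R)) \<subseteq> cbox (Complex (-R) 1) (Complex R R)"
      using R2 by (intro path_image_rectpath_subset_cbox) auto
    also have "\<dots> \<subseteq> {z. Im z > 1/2}" by (auto simp: in_cbox_complex_iff)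
    finally show ?thesis .
  qed
  have r2: "contour_integral (rectpath (Complex (-R) 1) (Complex R R)) Hu = 0"
    by (intro contour_integral_unique Cauchy_theorem_convex_simple[where S="{z. Im z > 1/2}"]
          holomorphic_on_subset[OF Hu_holo up_sub] convex_halfspace_Im_gt pi2) auto
  have e2: "U1 + U2 + U3 + U4 = 0"
    using rect_split[OF cont_P(1)[OF order_trans[OF pi2 up_sub]]] r2
    by (simp add: U1_def U2_def U3_def U4_def)
  define D1 where "D1 = contour_integral (linepath (Complex (-R) (-R)) (Complex R (-R))) Hd"
  define D2 where "D2 = contour_integral (linepath (Complex R (-R)) (Complex R 1)) Hd"
  define D3 where "D3 = contour_integral (linepath (Complex R 1) (Complex (-R) 1)) Hd"
  define D4 where "D4 = contour_integral (linepath (Complex (-R) 1) (Complex (-R) (-R))) Hd"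
  have Pbox: "P \<subseteq> box (Complex (-R) (-R)) (Complex R 1)"
    using Rb R0 by (auto simp: P_def in_box_complex_iff)
  have pi3: "path_image (rectpath (Complex (-R) (-R)) (Complex R 1)) \<subseteq> -P"
    using Pbox R0 path_image_rectpath_cbox_minus_box[of "Complex (-R) (-R)" "Complex R 1"] by auto
  have resd: "residue Hd p = - residue Hu p" if "p \<in> P" for p
  proof -
    define s where "s = - (P - {p})"
    have s: "open s" "p \<in> s" unfolding s_def using finP that by (intro open_compl_finite) auto
    have "residue Hd p = residue (\<lambda>z. \<Phi> z - Hu z) p"
    proof (rule residue_cong)
      have "\<forall>\<^sub>F z in at p. z \<in> s - {p}" by (rule eventually_at_in_open[OF s])
      thus "\<forall>\<^sub>F z in at p. Hd z = \<Phi> z - Hu z"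
        by (elim eventually_mono) (auto simp: s_def PHuHd)
    qed simp
    also have "\<dots> = residue \<Phi> p - residue Hu p"
    proof (rule residue_diff[OF s])
      show "\<Phi> holomorphic_on s - {p}" using Phi holomorphic_on_subset by blast
      show "Hu holomorphic_on s - {p}" using Hu_holo by (rule holomorphic_on_subset) (auto simp: s_def)
    qed
    also have "residue \<Phi> p = 0" using residue_holo[OF open_UNIV UNIV_I Phi] .
    finally show ?thesis by simp
  qed
  have Hu_eq: "Hu = (\<lambda>z. Nu z * Rf b b' z)" by (simp add: fun_eq_iff Hu_def)
  have sumres: "(\<Sum>p\<in>P. winding_number (rectpath (Complex (-R) (-R)) (Complex R 1)) p * residue Hd p) = - Resf b b' Nu"
  proof -
    have "(\<Sum>p\<in>P. winding_number (rectpath (Complex (-R) (-R)) (Complex R 1)) p * residue Hd p) = (\<Sum>p\<in>P. - residue Hu p)"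
      using Pbox by (intro sum.cong refl) (auto simp: winding_number_rectpath resd)
    also have "\<dots> = - (residue Hu 0 + residue Hu (complex_of_real b) + residue Hu (complex_of_real b'))"
      using b by (simp add: P_def)
    also have "\<dots> = - Resf b b' Nu"
      unfolding Hu_eq res_0[OF Nu b] res_b[OF Nu b] res_b'[OF Nu b] Resf_def by (simp add: algebra_simps)
    finally show ?thesis .
  qed
  have r3: "contour_integral (rectpath (Complex (-R) (-R)) (Complex R 1)) Hd = 2 * pi * \<i> * (- Resf b b' Nu)"
  proof -
    have "contour_integral (rectpath (Complex (-R) (-R)) (Complex R 1)) Hd
          = 2 * pi * \<i> * (\<Sum>p\<in>P. winding_number (rectpath (Complex (-R) (-R)) (Complex R 1)) p * residue Hd p)"
      using pi3 finP Hd_holo by (intro Residue_theorem) (auto simp: Compl_eq_Diff_UNIV)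
    thus ?thesis using sumres by simp
  qed
  have e3: "D1 + D2 + D3 + D4 = 2 * pi * \<i> * (- Resf b b' Nu)"
    using rect_split[OF cont_P(2)[OF pi3]] r3
    by (simp add: D1_def D2_def D3_def D4_def)
  have top_sub: "closed_segment (Complex R 1) (Complex (-R) 1) \<subseteq> -P"
    by (auto dest!: horiz_seg simp: P_def)
  have top_sub': "closed_segment (Complex (-R) 1) (Complex R 1) \<subseteq> -P"
    by (auto dest!: horiz_seg simp: P_def)
  have eS3: "S3 = contour_integral (linepath (Complex R 1) (Complex (-R) 1)) Hu + D3"
  proof -
    have "S3 = contour_integral (linepath (Complex R 1) (Complex (-R) 1)) (\<lambda>z. Hu z + Hd z)"
      unfolding S3_def using top_sub by (intro contour_integral_eq) (auto simp: PHuHd)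
    also have "\<dots> = contour_integral (linepath (Complex R 1) (Complex (-R) 1)) Hu + D3"
      unfolding D3_def using top_sub
      by (intro contour_integral_add contour_integrable_continuous_linepath cont_P) auto
    finally show ?thesis .
  qed
  have eU1: "U1 = - contour_integral (linepath (Complex R 1) (Complex (-R) 1)) Hu"
    unfolding U1_def using top_sub' by (intro contour_integral_reverse_linepath cont_P)
  have key: "S1 - 2 * pi * \<i> * Resf b b' Nu = - S2 - S4 - U2 - U3 - U4 + D1 + D2 + D4"
    using e1 e2 e3 eS3 eU1 by algebra
  have vR: "norm z \<ge> R" if "Re z = R \<or> Re z = -R" for z using reR[of z] that R0 by auto
  have iR: "norm z \<ge> R" if "Im z = R \<or> Im z = -R" for z using imR[of z] that R0 by auto
  have L2: "2 * R \<ge> 1" "2 * R \<ge> \<bar>1 - R\<bar>" "2 * R \<ge> \<bar>R - 1\<bar>" "2 * R \<ge> \<bar>R + 1\<bar>" "2 * R \<ge> \<bar>- R - 1\<bar>" "2 * R \<ge> \<bar>1 + R\<bar>"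
    "2 * R \<ge> \<bar>-R - R\<bar>" "2 * R \<ge> \<bar>R - - R\<bar>"  using R2 by auto
  have cS: "continuous_on (closed_segment a c) Hu" "continuous_on (closed_segment a c) Hd"
    if "\<And>z. z \<in> closed_segment a c \<Longrightarrow> norm z \<ge> R" for a c
    using that nP by (auto intro!: cont_P)
  have bS2: "norm S2 \<le> (2*B) * (2*R)" unfolding S2_def
  proof (rule side_bound[OF Phi_cont])
    fix z assume "z \<in> closed_segment (Complex R 0) (Complex R 1)"
    from vert_seg[OF this] show "norm (\<Phi> z) \<le> 2 * B" by (intro bPhi vR) auto
  qed (use L2 B0 in \<open>auto simp: norm_vert\<close>)
  have bS4: "norm S4 \<le> (2*B) * (2*R)" unfolding S4_def
  proof (rule side_bound[OF Phi_cont])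
    fix z assume "z \<in> closed_segment (Complex (-R) 1) (Complex (-R) 0)"
    from vert_seg[OF this] show "norm (\<Phi> z) \<le> 2 * B" by (intro bPhi vR) auto
  qed (use L2 B0 in \<open>auto simp: norm_vert\<close>)
  have bU2: "norm U2 \<le> (2*B) * (2*R)" unfolding U2_def
  proof (rule side_bound)
    have *: "z \<in> closed_segment (Complex R 1) (Complex R R) \<Longrightarrow> Re z = R \<and> Im z \<ge> 0" for z
      using R2 by (auto dest!: vert_seg)
    show "continuous_on (closed_segment (Complex R 1) (Complex R R)) Hu" by (rule cS) (use * vR in auto)
    fix z assume "z \<in> closed_segment (Complex R 1) (Complex R R)"
    from *[OF this] show "norm (Hu z) \<le> 2 * B" using bHu[of z] vR[of z] B0 by auto
  qed (use L2 B0 in \<open>auto simp: norm_vert\<close>)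
  have bU3: "norm U3 \<le> (2*B) * (2*R)" unfolding U3_def
  proof (rule side_bound)
    have *: "z \<in> closed_segment (Complex R R) (Complex (-R) R) \<Longrightarrow> Im z = R \<and> Im z \<ge> 0" for z
      using R2 by (auto dest!: horiz_seg)
    show "continuous_on (closed_segment (Complex R R) (Complex (-R) R)) Hu" by (rule cS) (use * iR in auto)
    fix z assume "z \<in> closed_segment (Complex R R) (Complex (-R) R)"
    from *[OF this] show "norm (Hu z) \<le> 2 * B" using bHu[of z] iR[of z] B0 by auto
  qed (use L2 B0 in \<open>auto simp: norm_horiz\<close>)
  have bU4: "norm U4 \<le> (2*B) * (2*R)" unfolding U4_def
  proof (rule side_bound)
    have *: "z \<in> closed_segment (Complex (-R) R) (Complex (-R) 1) \<Longrightarrow> Re z = -R \<and> Im z \<ge> 0" for z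
      using R2 by (auto dest!: vert_seg)
    show "continuous_on (closed_segment (Complex (-R) R) (Complex (-R) 1)) Hu" by (rule cS) (use * vR in auto)
    fix z assume "z \<in> closed_segment (Complex (-R) R) (Complex (-R) 1)"
    from *[OF this] show "norm (Hu z) \<le> 2 * B" using bHu[of z] vR[of z] B0 by auto
  qed (use L2 B0 in \<open>auto simp: norm_vert\<close>)
  have bD1: "norm D1 \<le> (2*B) * (2*R)" unfolding D1_def
  proof (rule side_bound)
    have *: "z \<in> closed_segment (Complex (-R) (-R)) (Complex R (-R)) \<Longrightarrow> Im z = -R \<and> Im z \<le> 1" for z
      using R2 by (auto dest!: horiz_seg)
    show "continuous_on (closed_segment (Complex (-R) (-R)) (Complex R (-R))) Hd" by (rule cS) (use * iR in auto)
    fix z assume "z \<in> closed_segment (Complex (-R) (-R)) (Complex R (-R))"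
    from *[OF this] show "norm (Hd z) \<le> 2 * B" using bHd[of z] iR[of z] B0 by auto
  qed (use L2 B0 in \<open>auto simp: norm_horiz\<close>)
  have bD2: "norm D2 \<le> (2*B) * (2*R)" unfolding D2_def
  proof (rule side_bound)
    have *: "z \<in> closed_segment (Complex R (-R)) (Complex R 1) \<Longrightarrow> Re z = R \<and> Im z \<le> 1" for z
      using R2 by (auto dest!: vert_seg)
    show "continuous_on (closed_segment (Complex R (-R)) (Complex R 1)) Hd" by (rule cS) (use * vR in auto)
    fix z assume "z \<in> closed_segment (Complex R (-R)) (Complex R 1)"
    from *[OF this] show "norm (Hd z) \<le> 2 * B" using bHd[of z] vR[of z] B0 by auto
  qed (use L2 B0 in \<open>auto simp: norm_vert\<close>)
  have bD4: "norm D4 \<le> (2*B) * (2*R)" unfolding D4_def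
  proof (rule side_bound)
    have *: "z \<in> closed_segment (Complex (-R) 1) (Complex (-R) (-R)) \<Longrightarrow> Re z = -R \<and> Im z \<le> 1" for z
      using R2 by (auto dest!: vert_seg)
    show "continuous_on (closed_segment (Complex (-R) 1) (Complex (-R) (-R))) Hd" by (rule cS) (use * vR in auto)
    fix z assume "z \<in> closed_segment (Complex (-R) 1) (Complex (-R) (-R))"
    from *[OF this] show "norm (Hd z) \<le> 2 * B" using bHd[of z] vR[of z] B0 by auto
  qed (use L2 B0 in \<open>auto simp: norm_vert\<close>)
  have "norm (S1 - 2 * pi * \<i> * Resf b b' Nu) \<le> 8 * ((2*B) * (2*R))"
    unfolding key using bS2 bS4 bU2 bU3 bU4 bD1 bD2 bD4 norm_triangle_ineq4 norm_triangle_ineq norm_minus_cancel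
    by (smt (verit, best) norm_triangle_ineq4 norm_triangle_ineq)
  also have "8 * ((2*B) * (2*R)) = 256 * A / R^3" unfolding B_def using R0
    by (simp add: field_simps power_eq_if)
  also have "S1 = integral {-R..R} (\<lambda>x. \<Phi> (of_real x))"
  proof -
    have "Complex (-R) 0 = complex_of_real (-R)" "Complex R 0 = complex_of_real R" by (simp_all add: complex_eq_iff)
    thus ?thesis unfolding S1_def using R0 by (subst contour_integral_linepath_Reals_eq) auto
  qed
  finally show ?thesis .
qed

lemma h_integrable: "(\<lambda>x::real. c * inverse (1 + x^2)) integrable_on UNIV"
proof -
  have "set_integrable lborel (einterval (-\<infinity>) \<infinity>) (\<lambda>x::real. inverse (1 + x^2))"
    by (rule integrable_inverse_1_plus_square)
  moreover have "einterval (-\<infinity>) \<infinity> = (UNIV :: real set)" by (auto simp: einterval_def)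
  ultimately have "(\<lambda>x::real. inverse (1 + x^2)) integrable_on UNIV"
    using set_borel_integral_eq_integral(1) by metis
  from integrable_on_cmult_left[OF this, of c] show ?thesis by simp
qed

lemma main_int:
  fixes b b' A :: real and Nu Nd \<Phi> :: "complex \<Rightarrow> complex"
  assumes b: "b \<noteq> 0" "b' \<noteq> 0" "b \<noteq> b'"
  and Nu: "Nu holomorphic_on UNIV" and Nd: "Nd holomorphic_on UNIV"
  and Bu: "\<And>z. Im z \<ge> 0 \<Longrightarrow> norm (Nu z) \<le> A"
  and Bd: "\<And>z. Im z \<le> 1 \<Longrightarrow> norm (Nd z) \<le> A"
  and Phi: "\<Phi> holomorphic_on UNIV"
  and eq: "\<And>z. z \<notin> {0, complex_of_real b, complex_of_real b'} \<Longrightarrow> \<Phi> z = (Nu z + Nd z) * Rf b b' z"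
  shows "((\<lambda>x. \<Phi> (of_real x)) has_integral (2 * pi * \<i> * Resf b b' Nu)) UNIV"
proof -
  define \<rho> where "\<rho> = 2 * (\<bar>b\<bar> + \<bar>b'\<bar> + 1)"
  define g where "g x = \<Phi> (complex_of_real x)" for x
  define L where "L = 2 * pi * \<i> * Resf b b' Nu"
  have \<rho>2: "\<rho> \<ge> 2" unfolding \<rho>_def by simp
  have A0: "A \<ge> 0" using Bu[of 0] norm_ge_zero[of "Nu 0"] by (simp del: norm_ge_zero)
  have gc: "continuous_on S g" for S unfolding g_def
    by (intro continuous_on_compose2[OF holomorphic_on_imp_continuous_on[OF Phi]] continuous_intros) auto
  obtain M where M: "M > 0" "\<And>x. x \<in> {-\<rho>..\<rho>} \<Longrightarrow> norm (g x) \<le> M"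
  proof -
    have "bounded (g ` {-\<rho>..\<rho>})" by (intro compact_imp_bounded compact_continuous_image gc) auto
    then obtain M where "M > 0" "\<And>y. y \<in> g ` {-\<rho>..\<rho>} \<Longrightarrow> norm y \<le> M" by (auto simp: bounded_pos)
    thus ?thesis using that by auto
  qed
  define C0 where "C0 = M * (1 + \<rho>^2) + 8 * A"
  have gb: "norm (g x) \<le> C0 * inverse (1 + x^2)" for x
  proof (cases "\<bar>x\<bar> \<le> \<rho>")
    case True
    have "norm (g x) \<le> M" using M(2)[of x] True by (simp add: abs_le_iff)
    also have "M \<le> M * (1 + \<rho>^2) * inverse (1 + x^2)"
    proof -
      have "x^2 \<le> \<rho>^2" using True by (metis abs_ge_zero power2_abs power_mono)
      hence "1 + x^2 \<le> 1 + \<rho>^2" by simp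
      hence "M * (1 + x^2) \<le> M * (1 + \<rho>^2)" using M(1) by (intro mult_left_mono) auto
      moreover have "1 + x^2 > 0" by (simp add: add_pos_nonneg)
      ultimately show ?thesis by (simp add: field_simps)
    qed
    also have "\<dots> \<le> C0 * inverse (1 + x^2)" unfolding C0_def using A0
      by (intro mult_right_mono) auto
    finally show ?thesis .
  next
    case False
    have xn: "norm (complex_of_real x) = \<bar>x\<bar>" by simp
    have nP: "complex_of_real x \<notin> {0, complex_of_real b, complex_of_real b'}"
      using False unfolding \<rho>_def by auto
    have Rb: "norm (Rf b b' (complex_of_real x)) \<le> 4 / \<bar>x\<bar>^4"
      using Rf_bound[of b b' "complex_of_real x"] False unfolding \<rho>_def by simp
    have "norm (g x) \<le> (norm (Nu x) + norm (Nd x)) * norm (Rf b b' (complex_of_real x))"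
      unfolding g_def eq[OF nP] norm_mult by (intro mult_right_mono norm_triangle_ineq) auto
    also have "\<dots> \<le> (2 * A) * (4 / \<bar>x\<bar>^4)"
      using Bu[of "complex_of_real x"] Bd[of "complex_of_real x"] Rb A0 by (intro mult_mono) auto
    also have "\<dots> \<le> 8 * A * inverse (1 + x^2)"
    proof -
      have ax: "2 \<le> \<bar>x\<bar>" using False \<rho>2 by linarith
      have x2: "4 \<le> x^2" using power_mono[OF ax, of 2] by simp
      have "x^2 * 4 \<le> x^2 * x^2" using x2 by (intro mult_left_mono) auto
      moreover have "\<bar>x\<bar>^4 = x^2 * x^2" by (simp add: power4_eq_xxxx power2_eq_square abs_mult_self_eq)
      ultimately have "1 + x^2 \<le> \<bar>x\<bar>^4" using x2 by linarith
      hence "inverse (\<bar>x\<bar>^4) \<le> inverse (1 + x^2)"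
        by (intro le_imp_inverse_le) (auto simp: add_pos_nonneg)
      thus ?thesis using A0 by (simp add: divide_inverse mult_left_mono)
    qed
    also have "\<dots> \<le> C0 * inverse (1 + x^2)" unfolding C0_def using M(1)
      by (intro mult_right_mono) auto
    finally show ?thesis .
  qed
  define f where "f k x = (if x \<in> {- real k..real k} then g x else 0)" for k :: nat and x
  have fi: "f k integrable_on UNIV" for k
    unfolding f_def integrable_restrict_UNIV by (intro integrable_continuous_interval gc)
  have fb: "norm (f k x) \<le> C0 * inverse (1 + x^2)" for k x
    using gb[of x] by (auto simp: f_def intro: order_trans[OF _ gb[of x]])
  have fc: "(\<lambda>k. f k x) \<longlonglongrightarrow> g x" for x
  proof (rule tendsto_eventually)
    obtain n :: nat where "\<bar>x\<bar> \<le> real n" using real_arch_simple by blast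
    thus "\<forall>\<^sub>F k in sequentially. f k x = g x"
      unfolding eventually_sequentially f_def by (intro exI[of _ n]) auto
  qed
  note dc = dominated_convergence[OF fi h_integrable fb fc]
  have lim1: "(\<lambda>k. integral {- real k..real k} g) \<longlonglongrightarrow> integral UNIV g"
    using dc(2) unfolding f_def integral_restrict_UNIV .
  have lim2: "(\<lambda>k. integral {- real k..real k} g) \<longlonglongrightarrow> L"
  proof -
    have "(\<lambda>k. integral {- real k..real k} g - L) \<longlonglongrightarrow> 0"
    proof (rule Lim_null_comparison)
      show "\<forall>\<^sub>F k in sequentially. norm (integral {- real k..real k} g - L) \<le> 256 * A * inverse (real k)"
      proof -
        obtain n :: nat where n: "\<rho> \<le> real n" using real_arch_simple by blast
        have "norm (integral {- real k..real k} g - L) \<le> 256 * A * inverse (real k)" if "k \<ge> n" for k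
        proof -
          have kr: "real k \<ge> \<rho>" using n that by linarith
          hence k1: "real k \<ge> 1" using \<rho>2 by linarith
          have "norm (integral {- real k..real k} g - L) \<le> 256 * A / real k ^ 3"
            unfolding g_def L_def using main_R[OF b Nu Nd Bu Bd Phi eq, of "real k"] kr unfolding \<rho>_def by simp
          also have "\<dots> \<le> 256 * A * inverse (real k)"
          proof -
            have "real k * 1 \<le> real k * (real k)^2" using k1 by (intro mult_left_mono) (auto simp: one_le_power)
            hence "real k \<le> real k ^ 3" by (simp add: power3_eq_cube power2_eq_square)
            hence "inverse (real k ^ 3) \<le> inverse (real k)" using k1 by (intro le_imp_inverse_le) auto
            thus ?thesis using A0 by (simp add: divide_inverse mult_left_mono)
          qed
          finally show ?thesis .
        qed
        thus ?thesis unfolding eventually_sequentially by blast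
      qed
      show "(\<lambda>k. 256 * A * inverse (real k)) \<longlonglongrightarrow> 0"
        using tendsto_mult_right_zero[OF lim_inverse_n, of "256 * A"] by simp
    qed
    thus ?thesis by (simp add: LIM_zero_iff)
  qed
  have "integral UNIV g = L" using LIMSEQ_unique[OF lim1 lim2] .
  thus ?thesis using dc(1) unfolding g_def L_def by (metis integrable_integral)
qed

definition E :: "(complex \<times> real) list \<Rightarrow> complex \<Rightarrow> complex" where
  "E xs z = (\<Sum>p\<leftarrow>xs. fst p * exp (\<i> * complex_of_real (snd p) * z))"

lemma E_Nil [simp]: "E [] z = 0" and E_Cons [simp]: "E (p # xs) z = fst p * exp (\<i> * complex_of_real (snd p) * z) + E xs z"
  by (simp_all add: E_def)

lemma E_holo: "E xs holomorphic_on S"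
  by (induction xs) (auto intro!: holomorphic_intros simp: E_def[abs_def])

lemma E_has_deriv: "(E xs has_field_derivative (\<Sum>p\<leftarrow>xs. fst p * (exp (\<i> * complex_of_real (snd p) * z) * (\<i> * complex_of_real (snd p))))) (at z)"
proof (induction xs)
  case Nil
  then show ?case by (simp add: E_def[abs_def])
next
  case (Cons p xs)
  have "((\<lambda>z. fst p * exp (\<i> * complex_of_real (snd p) * z) + E xs z) has_field_derivative
     (fst p * (exp (\<i> * complex_of_real (snd p) * z) * (\<i> * complex_of_real (snd p))) + (\<Sum>p\<leftarrow>xs. fst p * (exp (\<i> * complex_of_real (snd p) * z) * (\<i> * complex_of_real (snd p)))))) (at z)"
    by (rule DERIV_add[OF _ Cons.IH]) (auto intro!: derivative_eq_intros)
  thus ?case by (simp add: E_Cons[abs_def])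
qed

lemma E_deriv0: "deriv (E xs) 0 = (\<Sum>p\<leftarrow>xs. fst p * (\<i> * complex_of_real (snd p)))"
  using DERIV_imp_deriv[OF E_has_deriv[of xs 0]] by simp

lemma norm_exp_i: "norm (exp (\<i> * complex_of_real w * z)) = exp (- w * Im z)"
  by (simp add: norm_exp_eq_Re)

lemma E_bound_up:
  assumes "\<forall>p\<in>set xs. snd p \<ge> 0" "Im z \<ge> 0"
  shows "norm (E xs z) \<le> (\<Sum>p\<leftarrow>xs. norm (fst p))"
  using assms(1)
proof (induction xs)
  case (Cons p xs)
  have "norm (exp (\<i> * complex_of_real (snd p) * z)) \<le> 1"
    unfolding norm_exp_i using Cons.prems assms(2) by (simp add: mult_nonneg_nonneg)
  hence "norm (fst p * exp (\<i> * complex_of_real (snd p) * z)) \<le> norm (fst p)"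
    unfolding norm_mult by (simp add: mult_left_le)
  thus ?case using Cons by (simp, smt (verit) norm_triangle_ineq)
qed simp

lemma E_bound_dn:
  assumes "\<forall>p\<in>set xs. snd p \<le> 0" "Im z \<le> 1"
  shows "norm (E xs z) \<le> (\<Sum>p\<leftarrow>xs. norm (fst p) * exp (- snd p))"
  using assms(1)
proof (induction xs)
  case (Cons p xs)
  have "norm (exp (\<i> * complex_of_real (snd p) * z)) \<le> exp (- snd p)"
    unfolding norm_exp_i using Cons.prems assms(2) mult_right_mono_neg[of "Im z" 1 "snd p"]
    by (simp add: mult.commute)
  hence "norm (fst p * exp (\<i> * complex_of_real (snd p) * z)) \<le> norm (fst p) * exp (- snd p)"
    unfolding norm_mult by (simp add: mult_left_mono)
  thus ?case using Cons by (simp, smt (verit) norm_triangle_ineq)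
qed simp

lemma E_append [simp]: "E (xs @ ys) z = E xs z + E ys z"
  by (simp add: E_def)

lemma expm3: "exp (\<i> * complex_of_real ((a + c) + d) * z) = exp (\<i> * complex_of_real a * z) * exp (\<i> * complex_of_real c * z) * exp (\<i> * complex_of_real d * z)"
  by (simp add: exp_add[symmetric] algebra_simps)

lemma F1: "sin (complex_of_real b0 * z) ^ 2 = 1/2 - exp (\<i> * complex_of_real (2*b0) * z) / 4 - exp (\<i> * complex_of_real (-(2*b0)) * z) / 4"
proof -
  define e where "e = exp (\<i> * (complex_of_real b0 * z))"
  have e0: "e \<noteq> 0" by (simp add: e_def)
  have 1: "exp (- (\<i> * (complex_of_real b0 * z))) = 1 / e" by (simp add: e_def exp_minus field_simps)
  have 2: "exp (\<i> * complex_of_real (2*b0) * z) = e * e" by (simp add: e_def exp_add[symmetric] algebra_simps)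
  have 3: "exp (\<i> * complex_of_real (-(2*b0)) * z) = 1 / (e * e)" by (simp add: e_def exp_add[symmetric] exp_minus[symmetric] algebra_simps field_simps)
  show ?thesis unfolding sin_exp_eq 1 2 3 e_def[symmetric] using e0
    by (simp add: field_simps power2_eq_square)
qed

lemma F2: "sin (complex_of_real K * (complex_of_real b - z)) * sin (complex_of_real K * (z - complex_of_real b'))
   = exp (- \<i> * complex_of_real (K * (b + b'))) / 4 * exp (\<i> * complex_of_real (2*K) * z)
   + exp (\<i> * complex_of_real (K * (b + b'))) / 4 * exp (\<i> * complex_of_real (-(2*K)) * z)
   - complex_of_real (cos (K * (b - b'))) / 2"
proof -
  define P where "P = exp (\<i> * complex_of_real (K * b))"
  define Q where "Q = exp (\<i> * complex_of_real (K * b'))"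
  define V where "V = exp (\<i> * complex_of_real K * z)"
  have nz: "P \<noteq> 0" "Q \<noteq> 0" "V \<noteq> 0" by (simp_all add: P_def Q_def V_def)
  have a1: "exp (\<i> * (complex_of_real K * (complex_of_real b - z))) = P / V"
    by (simp add: P_def V_def exp_diff[symmetric] algebra_simps)
  have a2: "exp (- (\<i> * (complex_of_real K * (complex_of_real b - z)))) = V / P"
    by (simp add: P_def V_def exp_diff[symmetric] algebra_simps)
  have a3: "exp (\<i> * (complex_of_real K * (z - complex_of_real b'))) = V / Q"
    by (simp add: Q_def V_def exp_diff[symmetric] algebra_simps)
  have a4: "exp (- (\<i> * (complex_of_real K * (z - complex_of_real b')))) = Q / V"
    by (simp add: Q_def V_def exp_diff[symmetric] algebra_simps)
  have a5: "exp (- \<i> * complex_of_real (K * (b + b'))) = 1 / (P * Q)"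
    by (simp add: P_def Q_def exp_add[symmetric] exp_minus[symmetric] algebra_simps field_simps)
  have a6: "exp (\<i> * complex_of_real (K * (b + b'))) = P * Q"
    by (simp add: P_def Q_def exp_add[symmetric] algebra_simps)
  have a7: "exp (\<i> * complex_of_real (2*K) * z) = V * V"
    by (simp add: V_def exp_add[symmetric] algebra_simps)
  have a8: "exp (\<i> * complex_of_real (-(2*K)) * z) = 1 / (V * V)"
    by (simp add: V_def exp_add[symmetric] exp_minus[symmetric] algebra_simps field_simps)
  have a9: "complex_of_real (cos (K * (b - b'))) = (P / Q + Q / P) / 2"
  proof -
    have "complex_of_real (cos (K * (b - b'))) = cos (complex_of_real (K * (b - b')))" by (simp only: cos_of_real)
    also have "\<dots> = (exp (\<i> * complex_of_real (K * (b - b'))) + exp (- (\<i> * complex_of_real (K * (b - b'))))) / 2"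
      by (rule cos_exp_eq)
    also have "exp (\<i> * complex_of_real (K * (b - b'))) = P / Q"
      by (simp add: P_def Q_def exp_diff[symmetric] algebra_simps)
    also have "exp (- (\<i> * complex_of_real (K * (b - b')))) = Q / P"
      by (simp add: P_def Q_def exp_diff[symmetric] algebra_simps)
    finally show ?thesis .
  qed
  show ?thesis unfolding sin_exp_eq a1 a2 a3 a4 a5 a6 a7 a8 a9 using nz
    by (simp add: field_simps)
qed

definition cpl :: "real \<Rightarrow> real \<Rightarrow> real \<Rightarrow> complex" where
  "cpl K b b' = exp (- \<i> * complex_of_real (K * (b + b'))) / 4"
definition cml :: "real \<Rightarrow> real \<Rightarrow> real \<Rightarrow> complex" where
  "cml K b b' = exp (\<i> * complex_of_real (K * (b + b'))) / 4"
definition c0l :: "real \<Rightarrow> real \<Rightarrow> real \<Rightarrow> complex" where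
  "c0l K b b' = - complex_of_real (cos (K * (b - b'))) / 2"

definition Nf :: "real \<Rightarrow> real \<Rightarrow> real \<Rightarrow> real \<Rightarrow> real \<Rightarrow> complex \<Rightarrow> complex" where
  "Nf b0 mu K b b' z = exp (\<i> * complex_of_real (-mu) * z) * sin (complex_of_real b0 * z) ^ 2
      * sin (complex_of_real K * (complex_of_real b - z)) * sin (complex_of_real K * (z - complex_of_real b'))"

lemma N_eq: "Nf b0 mu K b b' z = E
   [(cpl K b b' / 2, (-mu + 0) + 2*K), (- cpl K b b' / 4, (-mu + 2*b0) + 2*K), (- cpl K b b' / 4, (-mu + -(2*b0)) + 2*K),
    (cml K b b' / 2, (-mu + 0) + -(2*K)), (- cml K b b' / 4, (-mu + 2*b0) + -(2*K)), (- cml K b b' / 4, (-mu + -(2*b0)) + -(2*K)),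
    (c0l K b b' / 2, (-mu + 0) + 0), (- c0l K b b' / 4, (-mu + 2*b0) + 0), (- c0l K b b' / 4, (-mu + -(2*b0)) + 0)] z"
proof -
  have "Nf b0 mu K b b' z = exp (\<i> * complex_of_real (-mu) * z) * sin (complex_of_real b0 * z) ^ 2
      * (sin (complex_of_real K * (complex_of_real b - z)) * sin (complex_of_real K * (z - complex_of_real b')))"
    by (simp add: Nf_def mult.assoc)
  also have "\<dots> = exp (\<i> * complex_of_real (-mu) * z) * (1/2 - exp (\<i> * complex_of_real (2*b0) * z) / 4 - exp (\<i> * complex_of_real (-(2*b0)) * z) / 4)
     * (cpl K b b' * exp (\<i> * complex_of_real (2*K) * z) + cml K b b' * exp (\<i> * complex_of_real (-(2*K)) * z) + c0l K b b')"
    unfolding F1 F2 cpl_def cml_def c0l_def by (simp add: algebra_simps)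
  also have "\<dots> = E
   [(cpl K b b' / 2, (-mu + 0) + 2*K), (- cpl K b b' / 4, (-mu + 2*b0) + 2*K), (- cpl K b b' / 4, (-mu + -(2*b0)) + 2*K),
    (cml K b b' / 2, (-mu + 0) + -(2*K)), (- cml K b b' / 4, (-mu + 2*b0) + -(2*K)), (- cml K b b' / 4, (-mu + -(2*b0)) + -(2*K)),
    (c0l K b b' / 2, (-mu + 0) + 0), (- c0l K b b' / 4, (-mu + 2*b0) + 0), (- c0l K b b' / 4, (-mu + -(2*b0)) + 0)] z"
    unfolding E_Cons E_Nil fst_conv snd_conv expm3 by (simp add: algebra_simps)
  finally show ?thesis .
qed

lemma main_E:
  fixes b b' :: real and \<Phi> :: "complex \<Rightarrow> complex"
  assumes b: "b \<noteq> 0" "b' \<noteq> 0" "b \<noteq> b'"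
  and up: "\<forall>p\<in>set xu. snd p \<ge> 0" and dn: "\<forall>p\<in>set xd. snd p \<le> 0"
  and Phi: "\<Phi> holomorphic_on UNIV"
  and eq: "\<And>z. z \<notin> {0, complex_of_real b, complex_of_real b'} \<Longrightarrow> \<Phi> z = (E xu z + E xd z) * Rf b b' z"
  shows "((\<lambda>x. \<Phi> (of_real x)) has_integral (2 * pi * \<i> * Resf b b' (E xu))) UNIV"
proof -
  define A where "A = (\<Sum>p\<leftarrow>xu. norm (fst p)) + (\<Sum>p\<leftarrow>xd. norm (fst p) * exp (- snd p))"
  have s1: "(\<Sum>p\<leftarrow>xu. norm (fst p)) \<ge> 0" by (intro sum_list_nonneg) auto
  have s2: "(\<Sum>p\<leftarrow>xd. norm (fst p) * exp (- snd p)) \<ge> 0" by (intro sum_list_nonneg) auto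
  show ?thesis
  proof (rule main_int[OF b E_holo E_holo _ _ Phi eq])
    show "norm (E xu z) \<le> A" if "Im z \<ge> 0" for z
      using E_bound_up[OF up that] s2 unfolding A_def by linarith
    show "norm (E xd z) \<le> A" if "Im z \<le> 1" for z
      using E_bound_dn[OF dn that] s1 unfolding A_def by linarith
  qed
qed

definition Phi0 :: "real \<Rightarrow> real \<Rightarrow> real \<Rightarrow> real \<Rightarrow> real \<Rightarrow> complex \<Rightarrow> complex" where
  "Phi0 b0 mu K b b' z = exp (\<i> * complex_of_real (-mu) * z) * sc b0 z ^ 2
      * sc K (complex_of_real b - z) * sc K (z - complex_of_real b')"

lemma Phi0_holo: "Phi0 b0 mu K b b' holomorphic_on UNIV"
proof -
  have h: "(\<lambda>z. sc a (f z)) holomorphic_on UNIV" if "f holomorphic_on UNIV" for a f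
    using holomorphic_on_compose[OF that sc_holo[THEN holomorphic_on_subset]] by (simp add: o_def)
  show ?thesis unfolding Phi0_def[abs_def]
    by (intro holomorphic_intros h sc_holo) 
qed

lemma Phi0_eq:
  assumes "z \<notin> {0, complex_of_real b, complex_of_real b'}"
  shows "Phi0 b0 mu K b b' z = Nf b0 mu K b b' z * Rf b b' z"
proof -
  have nz: "z \<noteq> 0" "complex_of_real b - z \<noteq> 0" "z - complex_of_real b' \<noteq> 0" using assms by auto
  show ?thesis unfolding Phi0_def Nf_def Rf_def sc_def using nz
    by (simp add: field_simps power2_eq_square)
qed

lemma orth_eq:
  assumes "x \<notin> {0, b, b'}"
  shows "orth_integrand b0 mu K b b' x = Phi0 b0 mu K b b' (complex_of_real x)"
proof -
  have nz: "x \<noteq> 0" "b - x \<noteq> 0" "x - b' \<noteq> 0" using assms by auto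
  show ?thesis unfolding orth_integrand_def Phi0_def sc_def using nz
    by (simp add: sin_of_real[symmetric] power2_eq_square field_simps)
qed

lemma S_formula:
  fixes b b' :: real
  assumes b: "b \<noteq> 0" "b' \<noteq> 0" "b \<noteq> b'"
  and up: "\<forall>p\<in>set xu. snd p \<ge> 0" and dn: "\<forall>p\<in>set xd. snd p \<le> 0"
  and eqN: "\<And>z. E xu z + E xd z = Nf b0 mu K b b' z"
  shows "orth_integrand b0 mu K b b' integrable_on UNIV"
        "S_orth b0 mu K C b b' = complex_of_real (C\<^sup>2 / (b0 * pi)) * (2 * pi * \<i> * Resf b b' (E xu))"
proof -
  have hP: "((\<lambda>x. Phi0 b0 mu K b b' (of_real x)) has_integral (2 * pi * \<i> * Resf b b' (E xu))) UNIV"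
    by (rule main_E[OF b up dn Phi0_holo]) (simp add: Phi0_eq eqN)
  have hi: "(orth_integrand b0 mu K b b' has_integral (2 * pi * \<i> * Resf b b' (E xu))) UNIV"
    by (intro has_integral_spike_finite[where S="{0, b, b'}", OF _ _ hP]) (auto simp: orth_eq)
  thus "orth_integrand b0 mu K b b' integrable_on UNIV" by blast
  show "S_orth b0 mu K C b b' = complex_of_real (C\<^sup>2 / (b0 * pi)) * (2 * pi * \<i> * Resf b b' (E xu))"
    unfolding S_orth_def using hi by (simp add: integral_unique)
qed

definition ex :: "real \<Rightarrow> complex" where "ex t = exp (\<i> * complex_of_real t)"

lemma ex_add: "ex (a + c) = ex a * ex c" by (simp add: ex_def exp_add[symmetric] algebra_simps)
lemma ex_minus: "ex (- a) = inverse (ex a)" by (simp add: ex_def exp_minus[symmetric])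
lemma ex_diff: "ex (a - c) = ex a / ex c" by (simp add: ex_def exp_diff[symmetric] algebra_simps)
lemma ex_double: "ex (2 * a) = ex a ^ 2" by (simp add: ex_def exp_add[symmetric] power2_eq_square algebra_simps)
lemma ex_nz: "ex a \<noteq> 0" by (simp add: ex_def)
lemma ex_0: "ex 0 = 1" by (simp add: ex_def)

lemma to_ex:
  "exp (\<i> * complex_of_real a * complex_of_real c) = ex (a * c)"
  "exp (\<i> * complex_of_real a) = ex a"
  "exp (- \<i> * complex_of_real a) = ex (- a)"
  "exp (- (\<i> * complex_of_real a)) = ex (- a)"
  "exp (- 2 * \<i> * complex_of_real a) = ex (- (2 * a))"
  "exp (- \<i> * complex_of_real a - \<i> * complex_of_real c) = ex (- a - c)"
  "exp (- \<i> * complex_of_real a + \<i> * complex_of_real c) = ex (- a + c)"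
  by (simp_all add: ex_def algebra_simps)

lemma exr:
  "ex (a + c) = ex a * ex c"
  "ex (a - c) = ex a / ex c"
  "ex (- a) = inverse (ex a)"
  "ex ((p + q) * x) = ex (p * x) * ex (q * x)"
  "ex ((p - q) * x) = ex (p * x) / ex (q * x)"
  "ex ((- p) * x) = inverse (ex (p * x))"
  "ex ((2 * p) * x) = ex (p * x) ^ 2"
  "ex (0 * x) = 1" "ex 0 = 1"
  "ex (p * (x - y)) = ex (p * x) / ex (p * y)"
  "ex (p * (x + y)) = ex (p * x) * ex (p * y)"
  "ex (2 * a) = ex a ^ 2"
  by (simp_all add: ex_add ex_diff ex_minus ex_0 algebra_simps)
     (metis ex_double mult.assoc mult.commute, metis ex_double mult.commute)

lemma sin_ex: "complex_of_real (sin t) = (ex t - ex (- t)) / (2 * \<i>)"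
  by (simp add: sin_of_real[symmetric] sin_exp_eq ex_def)

lemma case1:
  fixes b b' b0 mu K C :: real
  assumes b: "b \<noteq> 0" "b' \<noteq> 0" "b \<noteq> b'" and pos: "b0 > 0" "K > 0" "mu > 2 * b0"
    and c: "2 * K \<ge> mu + 2 * b0"
  shows "orth_integrand b0 mu K b b' integrable_on UNIV"
        "S_orth b0 mu K C b b' = K1_orth b0 mu K C b b'"
proof -
  define xu where "xu = [(cpl K b b' / 2, (-mu + 0) + 2*K), (- cpl K b b' / 4, (-mu + 2*b0) + 2*K), (- cpl K b b' / 4, (-mu + -(2*b0)) + 2*K)]"
  define xd where "xd = [(cml K b b' / 2, (-mu + 0) + -(2*K)), (- cml K b b' / 4, (-mu + 2*b0) + -(2*K)), (- cml K b b' / 4, (-mu + -(2*b0)) + -(2*K)),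
    (c0l K b b' / 2, (-mu + 0) + 0), (- c0l K b b' / 4, (-mu + 2*b0) + 0), (- c0l K b b' / 4, (-mu + -(2*b0)) + 0)]"
  have up: "\<forall>p\<in>set xu. snd p \<ge> 0" using pos c by (auto simp: xu_def)
  have dn: "\<forall>p\<in>set xd. snd p \<le> 0" using pos c by (auto simp: xd_def)
  have eqN: "E xu z + E xd z = Nf b0 mu K b b' z" for z
    unfolding N_eq xu_def xd_def by (simp add: add.assoc)
  note SF = S_formula[OF b up dn eqN]
  show "orth_integrand b0 mu K b b' integrable_on UNIV" by (rule SF(1))
  have "S_orth b0 mu K C b b' = complex_of_real (C\<^sup>2 / (b0 * pi)) * (2 * pi * \<i> * Resf b b' (E xu))" by (rule SF(2))
  also have "\<dots> = K1_orth b0 mu K C b b'"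
    unfolding Resf_def E_deriv0 K1_orth_def
    unfolding xu_def E_Cons E_Nil fst_conv snd_conv cpl_def list.map sum_list.Cons sum_list.Nil
    using b pos ex_nz[of "mu * b"] ex_nz[of "mu * b'"] ex_nz[of "K * b"] ex_nz[of "K * b'"] ex_nz[of "b0 * b"] ex_nz[of "b0 * b'"]
    apply (simp only: to_ex mult_zero_right)
    apply (simp only: of_real_mult of_real_divide of_real_power sin_ex exr)
    apply (simp add: divide_simps power2_eq_square del: of_real_diff)
    apply (rule disjI2)
    apply (simp add: algebra_simps)
    done
  finally show "S_orth b0 mu K C b b' = K1_orth b0 mu K C b b'" .
qed

lemma case2:
  fixes b b' b0 mu K C :: real
  assumes b: "b \<noteq> 0" "b' \<noteq> 0" "b \<noteq> b'" and pos: "b0 > 0" "K > 0" "mu > 2 * b0"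
    and c: "mu \<le> 2 * K" "2 * K \<le> mu + 2 * b0"
  shows "orth_integrand b0 mu K b b' integrable_on UNIV"
        "S_orth b0 mu K C b b' = K2_orth b0 mu K C b b'"
proof -
  define xu where "xu = [(cpl K b b' / 2, (-mu + 0) + 2*K), (- cpl K b b' / 4, (-mu + 2*b0) + 2*K)]"
  define xd where "xd = [(- cpl K b b' / 4, (-mu + -(2*b0)) + 2*K), (cml K b b' / 2, (-mu + 0) + -(2*K)), (- cml K b b' / 4, (-mu + 2*b0) + -(2*K)), (- cml K b b' / 4, (-mu + -(2*b0)) + -(2*K)), (c0l K b b' / 2, (-mu + 0) + 0), (- c0l K b b' / 4, (-mu + 2*b0) + 0), (- c0l K b b' / 4, (-mu + -(2*b0)) + 0)]"
  have up: "\<forall>p\<in>set xu. snd p \<ge> 0" using pos c by (auto simp: xu_def)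
  have dn: "\<forall>p\<in>set xd. snd p \<le> 0" using pos c by (auto simp: xd_def)
  have eqN: "E xu z + E xd z = Nf b0 mu K b b' z" for z
    unfolding N_eq xu_def xd_def by (simp add: ac_simps)
  note SF = S_formula[OF b up dn eqN]
  show "orth_integrand b0 mu K b b' integrable_on UNIV" by (rule SF(1))
  have "S_orth b0 mu K C b b' = complex_of_real (C\<^sup>2 / (b0 * pi)) * (2 * pi * \<i> * Resf b b' (E xu))" by (rule SF(2))
  also have "\<dots> = K2_orth b0 mu K C b b'"
    unfolding Resf_def E_deriv0 K2_orth_def f_tilde_def phi_tilde_def
    unfolding xu_def E_Cons E_Nil fst_conv snd_conv cpl_def list.map sum_list.Cons sum_list.Nil
    using b pos ex_nz[of "mu * b"] ex_nz[of "mu * b'"] ex_nz[of "K * b"] ex_nz[of "K * b'"] ex_nz[of "b0 * b"] ex_nz[of "b0 * b'"]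
    apply (simp only: to_ex mult_zero_right)
    apply (simp only: of_real_mult of_real_divide of_real_power sin_ex exr)
    apply (simp add: divide_simps power2_eq_square del: of_real_diff)
    apply (rule disjI2)
    apply (simp add: algebra_simps)
    done
  finally show "S_orth b0 mu K C b b' = K2_orth b0 mu K C b b'" .
qed

lemma case3:
  fixes b b' b0 mu K C :: real
  assumes b: "b \<noteq> 0" "b' \<noteq> 0" "b \<noteq> b'" and pos: "b0 > 0" "K > 0" "mu > 2 * b0"
    and c: "mu - 2 * b0 \<le> 2 * K" "2 * K \<le> mu"
  shows "orth_integrand b0 mu K b b' integrable_on UNIV"
        "S_orth b0 mu K C b b' = K3_orth b0 mu K C b b'"
proof -
  define xu where "xu = [(- cpl K b b' / 4, (-mu + 2*b0) + 2*K)]"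
  define xd where "xd = [(cpl K b b' / 2, (-mu + 0) + 2*K), (- cpl K b b' / 4, (-mu + -(2*b0)) + 2*K), (cml K b b' / 2, (-mu + 0) + -(2*K)), (- cml K b b' / 4, (-mu + 2*b0) + -(2*K)), (- cml K b b' / 4, (-mu + -(2*b0)) + -(2*K)), (c0l K b b' / 2, (-mu + 0) + 0), (- c0l K b b' / 4, (-mu + 2*b0) + 0), (- c0l K b b' / 4, (-mu + -(2*b0)) + 0)]"
  have up: "\<forall>p\<in>set xu. snd p \<ge> 0" using pos c by (auto simp: xu_def)
  have dn: "\<forall>p\<in>set xd. snd p \<le> 0" using pos c by (auto simp: xd_def)
  have eqN: "E xu z + E xd z = Nf b0 mu K b b' z" for z
    unfolding N_eq xu_def xd_def by (simp add: ac_simps)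
  note SF = S_formula[OF b up dn eqN]
  show "orth_integrand b0 mu K b b' integrable_on UNIV" by (rule SF(1))
  have "S_orth b0 mu K C b b' = complex_of_real (C\<^sup>2 / (b0 * pi)) * (2 * pi * \<i> * Resf b b' (E xu))" by (rule SF(2))
  also have "\<dots> = K3_orth b0 mu K C b b'"
    unfolding Resf_def E_deriv0 K3_orth_def h_tilde_def phi_tilde_def
    unfolding xu_def E_Cons E_Nil fst_conv snd_conv cpl_def list.map sum_list.Cons sum_list.Nil
    using b pos ex_nz[of "mu * b"] ex_nz[of "mu * b'"] ex_nz[of "K * b"] ex_nz[of "K * b'"] ex_nz[of "b0 * b"] ex_nz[of "b0 * b'"]
    apply (simp only: to_ex mult_zero_right)
    apply (simp only: of_real_mult of_real_divide of_real_power sin_ex exr)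
    apply (simp add: divide_simps power2_eq_square del: of_real_diff)
    apply (rule disjI2)
    apply (simp add: algebra_simps)
    done
  finally show "S_orth b0 mu K C b b' = K3_orth b0 mu K C b b'" .
qed

lemma case0:
  fixes b b' b0 mu K C :: real
  assumes b: "b \<noteq> 0" "b' \<noteq> 0" "b \<noteq> b'" and pos: "b0 > 0" "K > 0" "mu > 2 * b0"
    and c: "2 * K \<le> mu - 2 * b0"
  shows "orth_integrand b0 mu K b b' integrable_on UNIV"
        "S_orth b0 mu K C b b' = 0"
proof -
  define xu :: "(complex \<times> real) list" where "xu = []"
  define xd where "xd = [(cpl K b b' / 2, (-mu + 0) + 2*K), (- cpl K b b' / 4, (-mu + 2*b0) + 2*K), (- cpl K b b' / 4, (-mu + -(2*b0)) + 2*K),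
    (cml K b b' / 2, (-mu + 0) + -(2*K)), (- cml K b b' / 4, (-mu + 2*b0) + -(2*K)), (- cml K b b' / 4, (-mu + -(2*b0)) + -(2*K)),
    (c0l K b b' / 2, (-mu + 0) + 0), (- c0l K b b' / 4, (-mu + 2*b0) + 0), (- c0l K b b' / 4, (-mu + -(2*b0)) + 0)]"
  have up: "\<forall>p\<in>set xu. snd p \<ge> 0" by (simp add: xu_def)
  have dn: "\<forall>p\<in>set xd. snd p \<le> 0" using pos c by (auto simp: xd_def)
  have eqN: "E xu z + E xd z = Nf b0 mu K b b' z" for z
    unfolding N_eq xu_def xd_def by simp
  note SF = S_formula[OF b up dn eqN]
  show "orth_integrand b0 mu K b b' integrable_on UNIV" by (rule SF(1))
  have "Resf b b' (E xu) = 0" unfolding Resf_def E_deriv0 xu_def by simp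
  thus "S_orth b0 mu K C b b' = 0" using SF(2) by simp
qed

lemma main_cases:
  fixes b b' b0 mu K C :: real
  assumes b: "b \<noteq> 0" "b' \<noteq> 0" "b \<noteq> b'" and pos: "b0 > 0" "K > 0" "mu > 2 * b0"
  shows "orth_integrand b0 mu K b b' integrable_on UNIV"
    "2 * K \<ge> mu + 2 * b0 \<Longrightarrow> S_orth b0 mu K C b b' = K1_orth b0 mu K C b b'"
    "mu \<le> 2 * K \<Longrightarrow> 2 * K \<le> mu + 2 * b0 \<Longrightarrow> S_orth b0 mu K C b b' = K2_orth b0 mu K C b b'"
    "mu - 2 * b0 \<le> 2 * K \<Longrightarrow> 2 * K \<le> mu \<Longrightarrow> S_orth b0 mu K C b b' = K3_orth b0 mu K C b b'"
    "2 * K \<le> mu - 2 * b0 \<Longrightarrow> S_orth b0 mu K C b b' = 0"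
proof -
  show "orth_integrand b0 mu K b b' integrable_on UNIV"
  proof (cases "2 * K \<ge> mu + 2 * b0")
    case True thus ?thesis using case1(1)[OF b pos] by blast
  next
    case F1: False
    show ?thesis
    proof (cases "mu \<le> 2 * K")
      case True thus ?thesis using case2(1)[OF b pos] F1 by simp
    next
      case F2: False
      show ?thesis
      proof (cases "mu - 2 * b0 \<le> 2 * K")
        case True thus ?thesis using case3(1)[OF b pos] F2 by simp
      next
        case False thus ?thesis using case0(1)[OF b pos] by simp
      qed
    qed
  qed
  show "2 * K \<ge> mu + 2 * b0 \<Longrightarrow> S_orth b0 mu K C b b' = K1_orth b0 mu K C b b'"
    using case1(2)[OF b pos] by blast
  show "mu \<le> 2 * K \<Longrightarrow> 2 * K \<le> mu + 2 * b0 \<Longrightarrow> S_orth b0 mu K C b b' = K2_orth b0 mu K C b b'"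
    using case2(2)[OF b pos] by blast
  show "mu - 2 * b0 \<le> 2 * K \<Longrightarrow> 2 * K \<le> mu \<Longrightarrow> S_orth b0 mu K C b b' = K3_orth b0 mu K C b b'"
    using case3(2)[OF b pos] by blast
  show "2 * K \<le> mu - 2 * b0 \<Longrightarrow> S_orth b0 mu K C b b' = 0"
    using case0(2)[OF b pos] by blast
qed

lemma div_swap:
  fixes D P x :: real
  assumes "D > 0" "x > 0"
  shows "D \<le> P / x \<longleftrightarrow> x \<le> P / D" "P / x \<le> D \<longleftrightarrow> P / D \<le> x"
  using assms by (simp_all add: pos_le_divide_eq pos_divide_le_eq mult.commute)

lemma mainT_aux:
  fixes \<alpha> g0 \<kappa>0 b0 lam \<omega> n \<Delta>\<tau> b b' :: real
  assumes pos: "\<alpha> > 0" "g0 > 0" "\<kappa>0 > 0" "b0 > 0" "lam > 0" "\<omega> > 0"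
    and H: "n > 0" "lam * \<omega> * n > 2 * b0" "\<Delta>\<tau> > 0" "b \<noteq> 0" "b' \<noteq> 0" "b \<noteq> b'"
  shows "orth_integrand b0 (lam * \<omega> * n) (2 * lam * \<kappa>0 / (\<alpha> * g0 * \<Delta>\<tau>)) b b' integrable_on UNIV
    \<and> (\<Delta>\<tau> \<le> 4 * lam * \<kappa>0 / (\<alpha> * g0 * (lam * \<omega> * n + 2 * b0)) \<longrightarrow>
         S_orth b0 (lam * \<omega> * n) (2 * lam * \<kappa>0 / (\<alpha> * g0 * \<Delta>\<tau>)) (\<alpha> * g0 * \<Delta>\<tau> / (2 * lam * \<kappa>0)) b b'
          = K1_orth b0 (lam * \<omega> * n) (2 * lam * \<kappa>0 / (\<alpha> * g0 * \<Delta>\<tau>)) (\<alpha> * g0 * \<Delta>\<tau> / (2 * lam * \<kappa>0)) b b')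
    \<and> (4 * lam * \<kappa>0 / (\<alpha> * g0 * (lam * \<omega> * n + 2 * b0)) \<le> \<Delta>\<tau> \<and> \<Delta>\<tau> \<le> 4 * \<kappa>0 / (\<alpha> * g0 * \<omega> * n) \<longrightarrow>
         S_orth b0 (lam * \<omega> * n) (2 * lam * \<kappa>0 / (\<alpha> * g0 * \<Delta>\<tau>)) (\<alpha> * g0 * \<Delta>\<tau> / (2 * lam * \<kappa>0)) b b'
          = K2_orth b0 (lam * \<omega> * n) (2 * lam * \<kappa>0 / (\<alpha> * g0 * \<Delta>\<tau>)) (\<alpha> * g0 * \<Delta>\<tau> / (2 * lam * \<kappa>0)) b b')
    \<and> (4 * \<kappa>0 / (\<alpha> * g0 * \<omega> * n) \<le> \<Delta>\<tau> \<and> \<Delta>\<tau> \<le> 4 * lam * \<kappa>0 / (\<alpha> * g0 * (lam * \<omega> * n - 2 * b0)) \<longrightarrow>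
         S_orth b0 (lam * \<omega> * n) (2 * lam * \<kappa>0 / (\<alpha> * g0 * \<Delta>\<tau>)) (\<alpha> * g0 * \<Delta>\<tau> / (2 * lam * \<kappa>0)) b b'
          = K3_orth b0 (lam * \<omega> * n) (2 * lam * \<kappa>0 / (\<alpha> * g0 * \<Delta>\<tau>)) (\<alpha> * g0 * \<Delta>\<tau> / (2 * lam * \<kappa>0)) b b')
    \<and> (\<Delta>\<tau> \<ge> 4 * lam * \<kappa>0 / (\<alpha> * g0 * (lam * \<omega> * n - 2 * b0)) \<longrightarrow>
         S_orth b0 (lam * \<omega> * n) (2 * lam * \<kappa>0 / (\<alpha> * g0 * \<Delta>\<tau>)) (\<alpha> * g0 * \<Delta>\<tau> / (2 * lam * \<kappa>0)) b b' = 0)"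
proof -
  define \<mu> where "\<mu> = lam * \<omega> * n"
  define K where "K = 2 * lam * \<kappa>0 / (\<alpha> * g0 * \<Delta>\<tau>)"
  define C where "C = \<alpha> * g0 * \<Delta>\<tau> / (2 * lam * \<kappa>0)"
  define P where "P = 4 * lam * \<kappa>0 / (\<alpha> * g0)"
  have mu: "\<mu> > 2 * b0" using H by (simp add: \<mu>_def)
  have K0: "K > 0" using pos H by (simp add: K_def)
  have K2: "2 * K = P / \<Delta>\<tau>" by (simp add: K_def P_def field_simps)
  have e1: "4 * lam * \<kappa>0 / (\<alpha> * g0 * (\<mu> + 2 * b0)) = P / (\<mu> + 2 * b0)" by (simp add: P_def field_simps)
  have e2: "4 * \<kappa>0 / (\<alpha> * g0 * \<omega> * n) = P / \<mu>" using pos H by (simp add: P_def \<mu>_def field_simps)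
  have e3: "4 * lam * \<kappa>0 / (\<alpha> * g0 * (\<mu> - 2 * b0)) = P / (\<mu> - 2 * b0)" by (simp add: P_def field_simps)
  have p1: "\<mu> + 2 * b0 > 0" "\<mu> > 0" "\<mu> - 2 * b0 > 0" using mu pos by auto
  note MC = main_cases[OF H(4-6) pos(4) K0 mu]
  show ?thesis
    unfolding \<mu>_def[symmetric] K_def[symmetric] C_def[symmetric] e1 e2 e3
    using MC div_swap[OF H(3) p1(1), of P] div_swap[OF H(3) p1(2), of P] div_swap[OF H(3) p1(3), of P]
    unfolding K2[symmetric] by auto
qed

theorem mainTheorem7:
  fixes \<alpha> g0 \<kappa>0 b0 lam \<omega> :: real
  assumes "\<alpha> > 0" "g0 > 0" "\<kappa>0 > 0" "b0 > 0" "lam > 0" "\<omega> > 0"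
  shows "\<forall>(k::nat) (l::nat) \<Delta>\<tau> b b'.
           (let n = real k - real l; \<mu> = lam * \<omega> * n;
                K = 2 * lam * \<kappa>0 / (\<alpha> * g0 * \<Delta>\<tau>);
                C = \<alpha> * g0 * \<Delta>\<tau> / (2 * lam * \<kappa>0)
            in (l < k \<and> \<mu> > 2 * b0 \<and> \<Delta>\<tau> > 0 \<and> b \<noteq> 0 \<and> b' \<noteq> 0 \<and> b \<noteq> b') \<longrightarrow>
               orth_integrand b0 \<mu> K b b' integrable_on UNIV
             \<and> (\<Delta>\<tau> \<le> 4 * lam * \<kappa>0 / (\<alpha> * g0 * (\<mu> + 2 * b0)) \<longrightarrow>
                  S_orth b0 \<mu> K C b b' = K1_orth b0 \<mu> K C b b')
             \<and> (4 * lam * \<kappa>0 / (\<alpha> * g0 * (\<mu> + 2 * b0)) \<le> \<Delta>\<tau> \<and>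
                \<Delta>\<tau> \<le> 4 * \<kappa>0 / (\<alpha> * g0 * \<omega> * n) \<longrightarrow>
                  S_orth b0 \<mu> K C b b' = K2_orth b0 \<mu> K C b b')
             \<and> (4 * \<kappa>0 / (\<alpha> * g0 * \<omega> * n) \<le> \<Delta>\<tau> \<and>
                \<Delta>\<tau> \<le> 4 * lam * \<kappa>0 / (\<alpha> * g0 * (\<mu> - 2 * b0)) \<longrightarrow>
                  S_orth b0 \<mu> K C b b' = K3_orth b0 \<mu> K C b b')
             \<and> (\<Delta>\<tau> \<ge> 4 * lam * \<kappa>0 / (\<alpha> * g0 * (\<mu> - 2 * b0)) \<longrightarrow>
                  S_orth b0 \<mu> K C b b' = 0))
       \<and> (lam * \<omega> > 2 * b0 \<longrightarrow>
           (\<forall>(k::nat) (l::nat) \<Delta>\<tau> b b'.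
              l < k \<and> b \<noteq> 0 \<and> b' \<noteq> 0 \<and> b \<noteq> b' \<and>
              \<Delta>\<tau> \<ge> 4 * lam * \<kappa>0 / (\<alpha> * g0 * (lam * \<omega> - 2 * b0)) \<longrightarrow>
              S_orth b0 (lam * \<omega> * (real k - real l)) (2 * lam * \<kappa>0 / (\<alpha> * g0 * \<Delta>\<tau>))
                     (\<alpha> * g0 * \<Delta>\<tau> / (2 * lam * \<kappa>0)) b b' = 0))"
proof -
  have part2: "S_orth b0 (lam * \<omega> * (real k - real l)) (2 * lam * \<kappa>0 / (\<alpha> * g0 * \<Delta>\<tau>))
                     (\<alpha> * g0 * \<Delta>\<tau> / (2 * lam * \<kappa>0)) b b' = 0"
    if lw: "lam * \<omega> > 2 * b0" and H: "l < k" "b \<noteq> 0" "b' \<noteq> 0" "b \<noteq> b'"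
       "\<Delta>\<tau> \<ge> 4 * lam * \<kappa>0 / (\<alpha> * g0 * (lam * \<omega> - 2 * b0))" for k l :: nat and \<Delta>\<tau> b b' :: real
  proof -
    define n where "n = real k - real l"
    have n1: "n \<ge> 1" using H(1) by (simp add: n_def)
    have lw0: "lam * \<omega> > 0" using assms by simp
    have mu1: "lam * \<omega> * n \<ge> lam * \<omega>" using n1 lw0 by (simp add: mult_le_cancel_left1)
    have T1: "4 * lam * \<kappa>0 / (\<alpha> * g0 * (lam * \<omega> - 2 * b0)) > 0" using assms lw by simp
    have dt: "\<Delta>\<tau> > 0" using T1 H(5) by linarith
    have mun: "lam * \<omega> * n > 2 * b0" using mu1 lw by linarith
    have T2: "4 * lam * \<kappa>0 / (\<alpha> * g0 * (lam * \<omega> * n - 2 * b0)) \<le> 4 * lam * \<kappa>0 / (\<alpha> * g0 * (lam * \<omega> - 2 * b0))"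
      using assms lw mu1 mun by (intro divide_left_mono mult_left_mono mult_pos_pos) auto
    from mainT_aux[OF assms _ mun dt H(2-4)] n1 H(5) T2 show ?thesis
      unfolding n_def by auto
  qed
  show ?thesis
    apply (intro allI conjI)
     apply (unfold Let_def)
     apply (intro impI)
    subgoal for k l \<Delta>\<tau> b b'
      using mainT_aux[OF assms, of "real k - real l" \<Delta>\<tau> b b'] by auto
    using part2 by blast
qed

end
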